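(* Let $n\geq 1$, let $A\subseteq \mathbb{Z}^n$, and suppose $\dim \mathrm{Nb}(A)=d$ for some $d\in\mathbb{N}$. Then $\mathrm{Nb}(A)$ is locally finite; equivalently, every $a\in A$ has only finitely many $A$-neighbors.
   Context: For $a,b\in\mathbb{R}^n$, write $a \ll b$ if $\pi_i(a)<\pi_i(b)$ for all $i=1,\dots,n$, where $\pi_i$ is the $i$-th coordinate. For $B\subseteq\mathbb{R}^n$, $\vee B$ denotes the coordinatewise supremum in $(\mathbb{R}\cup\{\pm\infty\})^n$, i.e. $\pi_i(\vee B)=\sup\{\pi_i(b)\mid b\in B\}$. For $A\subseteq\mathbb{R}^n$, the neighbor complex $\mathrm{Nb}(A)$ is the set of all subsets $B\subseteq A$ such that there is no $a\in A$ with $a\ll \vee B$; it is an abstract simplicial complex on the vertex set $A$. Two points $a,a'\in A$ are called $A$-neighbors if $\{a,a'\}\in\mathrm{Nb}(A)$. For $B\in\mathrm{Nb}(A)$, $\dim B:=\mathrm{card}(B)-1$. We say $\dim\mathrm{Nb}(A)=d$ if $\dim B\leq d$ for all $B\in\mathrm{Nb}(A)$ and $\dim B=d$ for at least one $B\in\mathrm{Nb}(A)$. A simplicial complex is locally finite if each vertex is contained in only finitely many simplices. *)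

theory Defs
  imports "HOL-Analysis.Analysis"
begin

text \<open>Coordinatewise strict order: a << b iff every coordinate of a is smaller.
  The coordinatewise supremum of B lives in extended reals; we compare coordinatewise.\<close>

definition ll_sup :: "real^'n \<Rightarrow> (real^'n) set \<Rightarrow> bool" where
  "ll_sup a B \<longleftrightarrow> (\<forall>i. ereal (a $ i) < (SUP b\<in>B. ereal (b $ i)))"

definition Nb :: "(real^'n) set \<Rightarrow> (real^'n) set set" where
  "Nb A = {B. B \<subseteq> A \<and> \<not> (\<exists>a\<in>A. ll_sup a B)}"

definition neighbors :: "(real^'n) set \<Rightarrow> real^'n \<Rightarrow> real^'n \<Rightarrow> bool" where
  "neighbors A a a' \<longleftrightarrow> {a, a'} \<in> Nb A"

text \<open>dim B = card B - 1, which is infinite for infinite B; so dim Nb(A) = d means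
  every simplex is finite with at most d+1 elements, and some has exactly d+1.\<close>
definition dim_Nb_eq :: "(real^'n) set \<Rightarrow> nat \<Rightarrow> bool" where
  "dim_Nb_eq A d \<longleftrightarrow>
     (\<forall>B\<in>Nb A. finite B \<and> card B \<le> d + 1) \<and> (\<exists>B\<in>Nb A. finite B \<and> card B = d + 1)"

definition locally_finite_complex :: "'a set \<Rightarrow> 'a set set \<Rightarrow> bool" where
  "locally_finite_complex V K \<longleftrightarrow> (\<forall>v\<in>V. finite {B\<in>K. v \<in> B})"

end

theory Submission
  imports Defs
begin

lemma monoseq_comp:
  assumes "monoseq X" "strict_mono r"
  shows "monoseq (\<lambda>k. X (r k))"
  using assms unfolding monoseq_def by (meson strict_mono_less_eq)

lemma multi_monosub:
  fixes x :: "nat \<Rightarrow> 'i \<Rightarrow> real"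
  assumes "finite I"
  shows "\<exists>r. strict_mono r \<and> (\<forall>i\<in>I. monoseq (\<lambda>k. x (r k) i))"
  using assms
proof (induction I rule: finite_induct)
  case empty
  show ?case by (rule exI[of _ id]) (auto simp: strict_mono_def)
next
  case (insert j I)
  then obtain r where r: "strict_mono r" "\<forall>i\<in>I. monoseq (\<lambda>k. x (r k) i)" by blast
  obtain r' where r': "strict_mono r'" "monoseq (\<lambda>k. x (r (r' k)) j)"
    using seq_monosub[of "\<lambda>k. x (r k) j"] by blast
  have "strict_mono (r \<circ> r')" using r r' strict_mono_o by blast
  moreover have "\<forall>i\<in>insert j I. monoseq (\<lambda>k. x ((r \<circ> r') k) i)"
    using r r' monoseq_comp[of _ r'] by auto
  ultimately show ?case by blast
qed

lemma coord_ev: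
  fixes u :: "nat \<Rightarrow> real"
  assumes "monoseq u" "\<forall>k. u k \<in> \<int>" "c \<in> \<int>"
  shows "\<exists>K. \<forall>j\<ge>K. \<forall>k\<ge>j. max c (u j) \<le> max c (u k)"
proof (cases "\<forall>m. \<forall>n\<ge>m. u m \<le> u n")
  case True
  then show ?thesis by (metis max.mono order_refl)
next
  case False
  with assms(1) have dec: "\<forall>m. \<forall>n\<ge>m. u n \<le> u m" unfolding monoseq_def by blast
  define h where "h k = max c (u k)" for k
  have hint: "h k \<in> \<int>" for k using assms unfolding h_def by (simp add: max_def)
  define m where "m k = \<lfloor>h k\<rfloor>" for k
  have hm: "h k = of_int (m k)" for k using hint[of k] unfolding m_def
    by (metis Ints_cases floor_of_int)
  have mdec: "m n \<le> m k" if "k \<le> n" for k n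
    unfolding m_def h_def using dec that by (meson floor_mono max.mono order_refl)
  have mlow: "\<lfloor>c\<rfloor> \<le> m k" for k unfolding m_def h_def by (simp add: floor_mono)
  have fin: "finite (range m)"
    by (rule finite_subset[of _ "{\<lfloor>c\<rfloor>..m 0}"]) (use mdec mlow in auto)
  define M where "M = Min (range m)"
  have "M \<in> range m" unfolding M_def using fin by (intro Min_in) auto
  then obtain K where K: "m K = M" by auto
  have Mle: "M \<le> m k" for k unfolding M_def using fin by simp
  have "\<forall>j\<ge>K. \<forall>k\<ge>j. h j \<le> h k"
  proof (intro allI impI)
    fix j k assume "K \<le> j" "j \<le> k"
    then have "m j = m k" using mdec[of K j] mdec[of j k] Mle[of k] K by linarith
    then show "h j \<le> h k" using hm by simp
  qed
  then show ?thesis unfolding h_def by blast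
qed

lemma nbfin_lemma:
  fixes A :: "(real^'n) set" and d :: nat
  assumes "\<forall>a\<in>A. \<forall>i. a $ i \<in> \<int>"
    and dimB: "\<And>B. B \<in> Nb A \<Longrightarrow> finite B \<and> card B \<le> d + 1"
    and aA: "a \<in> A"
  shows "finite {a'\<in>A. neighbors A a a'}"
  proof (rule ccontr)
  assume inf: "infinite {a'\<in>A. neighbors A a a'}"
  obtain s :: "nat \<Rightarrow> real^'n" where s: "inj s" "range s \<subseteq> {a'\<in>A. neighbors A a a'}"
    using infinite_iff_countable_subset[THEN iffD1, OF inf] by (elim exE conjE)
  have "finite (UNIV :: 'n set)" by simp
  from multi_monosub[OF this, of "\<lambda>k i. s k $ i"]
  obtain r where r: "strict_mono r" "\<forall>i\<in>UNIV. monoseq (\<lambda>k. s (r k) $ i)"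
    by (elim exE conjE)
  define t where "t k = s (r k)" for k
  have tinj: "inj t" unfolding inj_def t_def using s(1) r(1) by (simp add: inj_eq strict_mono_eq)
  have tA: "t k \<in> A" and tN: "neighbors A a (t k)" for k using s(2) unfolding t_def by auto
  have ev: "\<forall>i. \<exists>K. \<forall>j\<ge>K. \<forall>k\<ge>j. max (a$i) (t j $ i) \<le> max (a$i) (t k $ i)"
  proof
    fix i
    show "\<exists>K. \<forall>j\<ge>K. \<forall>k\<ge>j. max (a$i) (t j $ i) \<le> max (a$i) (t k $ i)"
      using coord_ev[of "\<lambda>k. t k $ i" "a $ i"] r(2) assms(1) aA tA unfolding t_def by auto
  qed
  have "\<forall>\<^sub>F K in sequentially. \<forall>i. \<forall>j\<ge>K. \<forall>k\<ge>j. max (a$i) (t j $ i) \<le> max (a$i) (t k $ i)"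
  proof (rule eventually_all_finite)
    fix i
    obtain K where "\<forall>j\<ge>K. \<forall>k\<ge>j. max (a$i) (t j $ i) \<le> max (a$i) (t k $ i)" using ev by blast
    then show "\<forall>\<^sub>F K in sequentially. \<forall>j\<ge>K. \<forall>k\<ge>j. max (a$i) (t j $ i) \<le> max (a$i) (t k $ i)"
      unfolding eventually_sequentially
    proof (intro exI[of _ K] allI impI)
      fix n j k assume "K \<le> n" "n \<le> j" "j \<le> k"
      then show "max (a$i) (t j $ i) \<le> max (a$i) (t k $ i)"
        using \<open>\<forall>j\<ge>K. \<forall>k\<ge>j. max (a$i) (t j $ i) \<le> max (a$i) (t k $ i)\<close> by simp
    qed
  qed
  then obtain K where K: "\<forall>i. \<forall>j\<ge>K. \<forall>k\<ge>j. max (a$i) (t j $ i) \<le> max (a$i) (t k $ i)"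
    unfolding eventually_sequentially by blast
  define L where "L = K + d + 1"
  define F where "F = t ` {K..L}"
  define B where "B = insert a F"
  have cardF: "card F = d + 2" unfolding F_def L_def
    using card_image[OF inj_on_subset[OF tinj]] by simp
  have finF: "finite F" unfolding F_def by simp
  have "card F \<le> card B" unfolding B_def using finF by (simp add: card_mono subset_insertI)
  have BA: "B \<subseteq> A" unfolding B_def F_def using aA tA by auto
  have pair: "{a, t L} \<in> Nb A" using tN unfolding neighbors_def by blast
  have "B \<in> Nb A"
    unfolding Nb_def
  proof (intro CollectI conjI BA notI)
    assume "\<exists>c\<in>A. ll_sup c B"
    then obtain c where "c \<in> A" "ll_sup c B" by blast
    moreover have "\<not> ll_sup c {a, t L}" using pair \<open>c \<in> A\<close> unfolding Nb_def by blast
    then obtain i where i: "\<not> ereal (c $ i) < (SUP b\<in>{a, t L}. ereal (b $ i))"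
      unfolding ll_sup_def by blast
    have "(SUP b\<in>B. ereal (b $ i)) \<le> (SUP b\<in>{a, t L}. ereal (b $ i))"
    proof (rule SUP_least)
      fix b assume "b \<in> B"
      have ea: "ereal (a $ i) \<le> (SUP b\<in>{a, t L}. ereal (b $ i))" by (rule SUP_upper) auto
      have et: "ereal (t L $ i) \<le> (SUP b\<in>{a, t L}. ereal (b $ i))" by (rule SUP_upper) auto
      show "ereal (b $ i) \<le> (SUP b\<in>{a, t L}. ereal (b $ i))"
      proof (cases "b = a")
        case True then show ?thesis using ea by simp
      next
        case False
        then obtain j where j: "K \<le> j" "j \<le> L" "b = t j" using \<open>b \<in> B\<close> unfolding B_def F_def by auto
        have "max (a$i) (t j $ i) \<le> max (a$i) (t L $ i)" using K j by blast
        then have "t j $ i \<le> a $ i \<or> t j $ i \<le> t L $ i" by linarith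
        then show ?thesis
        proof
          assume "t j $ i \<le> a $ i"
          then have "ereal (t j $ i) \<le> ereal (a $ i)" by simp
          then show ?thesis using order_trans[OF _ ea] j(3) by simp
        next
          assume "t j $ i \<le> t L $ i"
          then have "ereal (t j $ i) \<le> ereal (t L $ i)" by simp
          then show ?thesis using order_trans[OF _ et] j(3) by simp
        qed
      qed
    qed
    ultimately have "ereal (c $ i) < (SUP b\<in>B. ereal (b $ i))"
      "(SUP b\<in>B. ereal (b $ i)) \<le> (SUP b\<in>{a, t L}. ereal (b $ i))"
      unfolding ll_sup_def by blast+
    then show False using i by (meson order_less_le_trans)
  qed
  then have "card B \<le> d + 1" using dimB by blast
  then show False using cardF \<open>card F \<le> card B\<close> by simp
qed

lemma lf_lemma:
  fixes A :: "(real^'n) set"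
  assumes nbfin: "\<And>a. a \<in> A \<Longrightarrow> finite {a'\<in>A. neighbors A a a'}"
  shows "locally_finite_complex A (Nb A)"
  unfolding locally_finite_complex_def
proof
  fix v assume vA: "v \<in> A"
  have "{B \<in> Nb A. v \<in> B} \<subseteq> Pow (insert v {a'\<in>A. neighbors A v a'})"
  proof
    fix B assume B: "B \<in> {B \<in> Nb A. v \<in> B}"
    have "b \<in> insert v {a'\<in>A. neighbors A v a'}" if "b \<in> B" for b
    proof -
      have sub: "{v, b} \<subseteq> B" using B that by auto
      have "{v, b} \<in> Nb A"
        unfolding Nb_def
      proof (intro CollectI conjI notI)
        show "{v, b} \<subseteq> A" using sub B unfolding Nb_def by auto
        assume "\<exists>c\<in>A. ll_sup c {v, b}"
        then obtain c where c: "c \<in> A" "ll_sup c {v, b}" by blast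
        have le: "(SUP x\<in>{v,b}. ereal (x$i)) \<le> (SUP x\<in>B. ereal (x$i))" for i
          by (rule SUP_subset_mono[OF sub]) simp
        have "ll_sup c B" unfolding ll_sup_def
        proof
          fix i show "ereal (c $ i) < (SUP x\<in>B. ereal (x$i))"
            using c(2) le[of i] unfolding ll_sup_def by (meson order_less_le_trans)
        qed
        then show False using B c(1) unfolding Nb_def by blast
      qed
      then show ?thesis using sub B unfolding neighbors_def Nb_def by auto
    qed
    then show "B \<in> Pow (insert v {a'\<in>A. neighbors A v a'})" by auto
  qed
  then show "finite {B \<in> Nb A. v \<in> B}" using nbfin[OF vA] by (meson finite_Pow_iff finite_insert finite_subset)
qed

theorem mainTheorem1:
  fixes A :: "(real^'n) set" and d :: nat
  assumes "\<forall>a\<in>A. \<forall>i. a $ i \<in> \<int>"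
    and "dim_Nb_eq A d"
  shows "locally_finite_complex A (Nb A) \<and> (\<forall>a\<in>A. finite {a'\<in>A. neighbors A a a'})"
proof -
  have dimB: "\<And>B. B \<in> Nb A \<Longrightarrow> finite B \<and> card B \<le> d + 1"
    using assms(2) unfolding dim_Nb_eq_def by blast
  have nbfin: "finite {a'\<in>A. neighbors A a a'}" if "a \<in> A" for a
    using nbfin_lemma[OF assms(1) dimB that] .
  show ?thesis using lf_lemma[of A] nbfin by blast
qed

end
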